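(* Fix $\rho>0$, integers $M\ge N\ge1$ and scalars $c_0,\dots,c_{N-1}>0$, and let $f(z):=c_0+c_1z+\cdots+c_{N-1}z^{N-1}-\mathcal{C}(\mathbf{c};z^M;N,\rho)^{-1}z^M$. (1) If $N>1$ and $A\in\mathbb{P}_N(\overline{D}(0,\rho))$ has a row or column whose entries are pairwise distinct, then $f[A]$ is positive definite. (2) For $A\in\mathbb{P}_N(\overline{D}(0,\rho))$, the equality $A^{\circ M}=\mathcal{C}(\mathbf{c};z^M;N,\rho)\,(c_0\mathbf{1}_{N\times N}+c_1A+\cdots+c_{N-1}A^{\circ(N-1)})$ never holds unless $N=1$ and $A=(\rho)$.
   Context: $\mathbb{P}_N(\overline{D}(0,\rho))$ is the set of $N\times N$ Hermitian positive semidefinite matrices with entries in the closed disc of radius $\rho$ about $0$; $f[A]$ is entrywise application; $A^{\circ n}$ is the entrywise power; $\mathbf{1}_{N\times N}$ is the all-ones matrix. $\mathcal{C}(\mathbf{c};z^M;N,\rho):=\sum_{j=0}^{N-1}\binom{M}{j}^2\binom{M-j-1}{N-j-1}^2\rho^{M-j}/c_j$. *)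

theory Defs
  imports "HOL-Analysis.Analysis"
begin

text \<open>N x N complex matrices are represented as functions nat => nat => complex,
  only the entries with indices < N being relevant.\<close>

definition hermitian_on :: "nat \<Rightarrow> (nat \<Rightarrow> nat \<Rightarrow> complex) \<Rightarrow> bool" where
  "hermitian_on N A \<longleftrightarrow> (\<forall>i<N. \<forall>j<N. A j i = cnj (A i j))"

definition quad_form :: "nat \<Rightarrow> (nat \<Rightarrow> nat \<Rightarrow> complex) \<Rightarrow> (nat \<Rightarrow> complex) \<Rightarrow> complex" where
  "quad_form N A x = (\<Sum>i<N. \<Sum>j<N. cnj (x i) * A i j * x j)"

definition psd_on :: "nat \<Rightarrow> (nat \<Rightarrow> nat \<Rightarrow> complex) \<Rightarrow> bool" where
  "psd_on N A \<longleftrightarrow> hermitian_on N A \<and>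
     (\<forall>x. Im (quad_form N A x) = 0 \<and> Re (quad_form N A x) \<ge> 0)"

definition posdef_on :: "nat \<Rightarrow> (nat \<Rightarrow> nat \<Rightarrow> complex) \<Rightarrow> bool" where
  "posdef_on N A \<longleftrightarrow> hermitian_on N A \<and>
     (\<forall>x. (\<exists>i<N. x i \<noteq> 0) \<longrightarrow> Im (quad_form N A x) = 0 \<and> Re (quad_form N A x) > 0)"

definition PN_disc :: "nat \<Rightarrow> real \<Rightarrow> (nat \<Rightarrow> nat \<Rightarrow> complex) set" where
  "PN_disc N \<rho> = {A. psd_on N A \<and> (\<forall>i<N. \<forall>j<N. cmod (A i j) \<le> \<rho>)}"

definition CC :: "(nat \<Rightarrow> real) \<Rightarrow> nat \<Rightarrow> nat \<Rightarrow> real \<Rightarrow> real" where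
  "CC c M N \<rho> = (\<Sum>j<N. real ((M choose j)^2 * ((M - j - 1) choose (N - j - 1))^2)
                         * \<rho> ^ (M - j) / c j)"

end

theory Submission
  imports Defs "HOL-Computational_Algebra.Polynomial"
begin



definition qf :: "nat set \<Rightarrow> (nat \<Rightarrow> nat \<Rightarrow> complex) \<Rightarrow> (nat \<Rightarrow> complex) \<Rightarrow> complex" where
  "qf I A x = (\<Sum>i\<in>I. \<Sum>j\<in>I. cnj (x i) * A i j * x j)"

definition herm :: "nat set \<Rightarrow> (nat \<Rightarrow> nat \<Rightarrow> complex) \<Rightarrow> bool" where
  "herm I A \<longleftrightarrow> (\<forall>i\<in>I. \<forall>j\<in>I. A j i = cnj (A i j))"

definition psd :: "nat set \<Rightarrow> (nat \<Rightarrow> nat \<Rightarrow> complex) \<Rightarrow> bool" where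
  "psd I A \<longleftrightarrow> herm I A \<and> (\<forall>x. 0 \<le> Re (qf I A x))"

lemma herm_qf_real:
  assumes "herm I A" shows "Im (qf I A x) = 0"
proof -
  have "cnj (qf I A x) = (\<Sum>i\<in>I. \<Sum>j\<in>I. x i * cnj (A i j) * cnj (x j))"
    by (simp add: qf_def)
  also have "\<dots> = (\<Sum>i\<in>I. \<Sum>j\<in>I. cnj (x j) * A j i * x i)"
  proof (intro sum.cong refl)
    fix i j assume "i \<in> I" "j \<in> I"
    then have "A j i = cnj (A i j)" using assms unfolding herm_def by blast
    then show "x i * cnj (A i j) * cnj (x j) = cnj (x j) * A j i * x i" by simp
  qed
  also have "\<dots> = qf I A x"
    unfolding qf_def by (rule sum.swap)
  finally have "cnj (qf I A x) = qf I A x" .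
  then have "Im (cnj (qf I A x)) = Im (qf I A x)" by simp
  then show ?thesis by simp
qed

lemma qf_add: "qf I (\<lambda>i j. A i j + B i j) x = qf I A x + qf I B x"
  by (simp add: qf_def algebra_simps sum.distrib)

lemma qf_diff: "qf I (\<lambda>i j. A i j - B i j) x = qf I A x - qf I B x"
  by (simp add: qf_def algebra_simps sum_subtractf)

lemma qf_scale: "qf I (\<lambda>i j. a * A i j) x = a * qf I A x"
  unfolding qf_def sum_distrib_left by (rule sum.cong[OF refl])+ (simp only: ac_simps)

lemma qf_sum: "qf I (\<lambda>i j. \<Sum>k\<in>K. A k i j) x = (\<Sum>k\<in>K. qf I (A k) x)"
proof -
  have "qf I (\<lambda>i j. \<Sum>k\<in>K. A k i j) x = (\<Sum>i\<in>I. \<Sum>j\<in>I. \<Sum>k\<in>K. cnj (x i) * A k i j * x j)"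
    unfolding qf_def by (simp add: sum_distrib_left sum_distrib_right)
  also have "\<dots> = (\<Sum>i\<in>I. \<Sum>k\<in>K. \<Sum>j\<in>I. cnj (x i) * A k i j * x j)"
    by (rule sum.cong[OF refl], rule sum.swap)
  also have "\<dots> = (\<Sum>k\<in>K. qf I (A k) x)"
    unfolding qf_def by (rule sum.swap)
  finally show ?thesis .
qed
lemma qf_rank_one:
  "qf I (\<lambda>i j. u i * cnj (u j)) x = (\<Sum>i\<in>I. cnj (x i) * u i) * cnj (\<Sum>i\<in>I. cnj (x i) * u i)"
  unfolding qf_def by (simp add: sum_product algebra_simps)

lemma cnj_mult_self: "z * cnj z = complex_of_real ((cmod z)^2)"
  by (simp add: complex_norm_square[symmetric] del: of_real_power)

lemma qf_rank_one_Re: "Re (qf I (\<lambda>i j. u i * cnj (u j)) x) = (cmod (\<Sum>i\<in>I. cnj (x i) * u i))^2"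
  by (simp only: qf_rank_one cnj_mult_self Re_complex_of_real)

lemma herm_rank_one: "herm I (\<lambda>i j. u i * cnj (u j))"
  by (simp add: herm_def mult.commute)

lemma psd_rank_one: "psd I (\<lambda>i j. u i * cnj (u j))"
  unfolding psd_def using herm_rank_one qf_rank_one_Re by simp

lemma psd_empty: "psd {} A"
  by (simp add: psd_def herm_def qf_def)

lemma psd_subset:
  assumes "psd I A" "J \<subseteq> I" "finite I" shows "psd J A"
proof -
  have "herm J A" using assms unfolding psd_def herm_def by blast
  moreover have "0 \<le> Re (qf J A x)" for x
  proof -
    define y where "y i = (if i \<in> J then x i else 0)" for i
    have "qf I A y = (\<Sum>i\<in>J. \<Sum>j\<in>I. cnj (y i) * A i j * y j)"
      unfolding qf_def using assms by (intro sum.mono_neutral_right) (auto simp: y_def)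
    also have "\<dots> = (\<Sum>i\<in>J. \<Sum>j\<in>J. cnj (y i) * A i j * y j)"
      using assms by (intro sum.cong refl sum.mono_neutral_right) (auto simp: y_def)
    also have "\<dots> = qf J A x" unfolding qf_def by (intro sum.cong refl) (auto simp: y_def)
    finally show ?thesis using assms unfolding psd_def by metis
  qed
  ultimately show ?thesis unfolding psd_def by blast
qed

lemma qf_delta:
  assumes "finite I" "k \<in> I"
  shows "qf I A (\<lambda>j. if j = k then 1 else 0) = A k k"
proof -
  have "(\<Sum>j\<in>I. cnj (if i = k then 1 else 0) * A i j * (if j = k then 1 else 0)) = (if i = k then A k k else 0)" for i
    using assms by (simp add: if_distrib cong: if_cong)
  then show ?thesis unfolding qf_def using assms by simp
qed

lemma psd_diag:
  assumes "psd I A" "finite I" "k \<in> I"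
  shows "Im (A k k) = 0" "0 \<le> Re (A k k)" "A k k = complex_of_real (Re (A k k))"
proof -
  have "A k k = cnj (A k k)" using assms unfolding psd_def herm_def by blast
  then show i: "Im (A k k) = 0" by (metis cnj.sel(2) neg_equal_zero)
  show "0 \<le> Re (A k k)" using assms qf_delta[of I k A] unfolding psd_def by metis
  show "A k k = complex_of_real (Re (A k k))" using i by (simp add: complex_eq_iff)
qed

lemma qf_two:
  assumes "finite I" "i \<in> I" "k \<in> I" "i \<noteq> k"
  shows "qf I A (\<lambda>j. (if j = i then 1 else 0) + (if j = k then t else 0))
        = A i i + A i k * t + cnj t * A k i + cnj t * A k k * t"
proof -
  define y where "y j = (if j = i then 1 else 0) + (if j = k then t else 0)" for j
  have inner: "(\<Sum>j\<in>I. cnj (y i') * A i' j * y j) = cnj (y i') * (A i' i + A i' k * t)" for i'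
  proof -
    have "(\<Sum>j\<in>I. cnj (y i') * A i' j * y j) = (\<Sum>j\<in>I. (if j = i then cnj (y i') * A i' j else 0) + (if j = k then cnj (y i') * A i' j * t else 0))"
      using assms by (intro sum.cong) (auto simp: y_def)
    also have "\<dots> = cnj (y i') * A i' i + cnj (y i') * A i' k * t"
      using assms by (simp add: sum.distrib)
    finally show ?thesis by (simp add: algebra_simps)
  qed
  have "qf I A y = (\<Sum>i'\<in>I. cnj (y i') * (A i' i + A i' k * t))"
    unfolding qf_def using inner by simp
  also have "\<dots> = (\<Sum>i'\<in>I. (if i' = i then (A i i + A i k * t) else 0) + (if i' = k then cnj t * (A k i + A k k * t) else 0))"
    using assms by (intro sum.cong) (auto simp: y_def)
  also have "\<dots> = A i i + A i k * t + cnj t * A k i + cnj t * A k k * t"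
    using assms by (simp add: sum.distrib algebra_simps)
  finally show ?thesis unfolding y_def .
qed


lemma psd_offdiag:
  assumes "psd I A" "finite I" "i \<in> I" "k \<in> I" "Re (A k k) = 0"
  shows "A i k = 0"
proof (cases "i = k")
  case True then show ?thesis using psd_diag(1)[OF assms(1,2,4)] assms(5) by (simp add: complex_eq_iff)
next
  case False
  have Akk: "A k k = 0" using psd_diag(1)[OF assms(1,2,4)] assms(5) by (simp add: complex_eq_iff)
  have Aki: "A k i = cnj (A i k)" using assms unfolding psd_def herm_def by blast
  show ?thesis
  proof (rule ccontr)
    assume nz: "A i k \<noteq> 0"
    define w where "w = A i k"
    define m where "m = (cmod w)^2"
    have mpos: "m > 0" using nz by (simp add: m_def w_def)
    define l where "l = (Re (A i i) + 1) / (2 * m)"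
    define t where "t = - complex_of_real l * cnj w"
    have "0 \<le> Re (qf I A (\<lambda>j. (if j = i then 1 else 0) + (if j = k then t else 0)))"
      using assms(1) unfolding psd_def by blast
    also have "qf I A (\<lambda>j. (if j = i then 1 else 0) + (if j = k then t else 0))
        = A i i + A i k * t + cnj t * A k i + cnj t * A k k * t"
      using qf_two[OF assms(2,3,4) False] by blast
    also have "\<dots> = A i i - 2 * complex_of_real l * (w * cnj w)"
      unfolding t_def Akk Aki w_def by (simp add: algebra_simps)
    also have "w * cnj w = complex_of_real m" unfolding m_def by (rule cnj_mult_self)
    finally have "0 \<le> Re (A i i) - 2 * l * m" by simp
    also have "2 * l * m = Re (A i i) + 1" unfolding l_def using mpos by simp
    finally show False by simp
  qed
qed

definition zeta :: "nat \<Rightarrow> (nat \<Rightarrow> nat \<Rightarrow> complex) \<Rightarrow> nat \<Rightarrow> complex" where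
  "zeta k A i = (if Re (A k k) = 0 then 0 else A i k / complex_of_real (sqrt (Re (A k k))))"

lemma qf_remove:
  assumes "finite I" "k \<in> I" "\<forall>j\<in>I. D k j = 0" "\<forall>i\<in>I. D i k = 0"
  shows "qf I D x = qf (I - {k}) D x"
proof -
  have "qf I D x = (\<Sum>i\<in>I - {k}. \<Sum>j\<in>I. cnj (x i) * D i j * x j)"
    unfolding qf_def using assms by (intro sum.mono_neutral_right) auto
  also have "\<dots> = qf (I - {k}) D x"
    unfolding qf_def using assms by (intro sum.cong refl sum.mono_neutral_right) auto
  finally show ?thesis .
qed

lemma qf_cong: "(\<And>i. i \<in> I \<Longrightarrow> x i = y i) \<Longrightarrow> qf I D x = qf I D y"
  unfolding qf_def by simp

lemma schur_compl:
  assumes "psd I A" "finite I" "k \<in> I"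
  defines "D \<equiv> (\<lambda>i j. A i j - zeta k A i * cnj (zeta k A j))"
  shows "psd I D" "\<forall>j\<in>I. D k j = 0" "\<forall>i\<in>I. D i k = 0"
proof -
  define a where "a = Re (A k k)"
  have herm: "\<forall>i\<in>I. \<forall>j\<in>I. A j i = cnj (A i j)" using assms(1) unfolding psd_def herm_def by blast
  have Akk: "A k k = complex_of_real a" unfolding a_def by (rule psd_diag(3)[OF assms(1,2,3)])
  have zero: "(\<forall>j\<in>I. D k j = 0) \<and> (\<forall>i\<in>I. D i k = 0)"
  proof (cases "a = 0")
    case True
    then have "\<forall>i\<in>I. A i k = 0" using psd_offdiag[OF assms(1,2) _ assms(3)] a_def by auto
    moreover have "\<forall>j\<in>I. A k j = 0"
    proof
      fix j assume j: "j \<in> I"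
      have "A k j = cnj (A j k)" using herm j assms(3) by blast
      then show "A k j = 0" using \<open>\<forall>i\<in>I. A i k = 0\<close> j by simp
    qed
    ultimately show ?thesis using True unfolding D_def zeta_def a_def by simp
  next
    case False
    then have apos: "a > 0" using psd_diag(2)[OF assms(1,2,3)] a_def by simp
    define s where "s = complex_of_real (sqrt a)"
    have cs: "cnj s = s" unfolding s_def by simp
    have s0: "s \<noteq> 0" using apos s_def by simp
    have z: "zeta k A i = A i k / s" for i using False unfolding zeta_def a_def s_def by simp
    have zk: "zeta k A k = s" unfolding z Akk s_def using apos
      by (simp add: real_div_sqrt flip: of_real_divide)
    have "\<forall>i\<in>I. D i k = 0"
    proof
      fix i assume "i \<in> I"
      have "zeta k A i * cnj (zeta k A k) = A i k" unfolding zk cs unfolding z using s0 by simp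
      then show "D i k = 0" unfolding D_def by simp
    qed
    moreover have "\<forall>j\<in>I. D k j = 0"
    proof
      fix j assume "j \<in> I"
      have "A k j = cnj (A j k)" using herm \<open>j \<in> I\<close> assms(3) by blast
      moreover have "zeta k A k * cnj (zeta k A j) = cnj (A j k)" unfolding zk unfolding z using s0 cs by simp
      ultimately show "D k j = 0" unfolding D_def by simp
    qed
    ultimately show ?thesis by blast
  qed
  then show "\<forall>j\<in>I. D k j = 0" "\<forall>i\<in>I. D i k = 0" by blast+
  have hermD: "herm I D" unfolding herm_def
  proof (intro ballI)
    fix i j assume "i \<in> I" "j \<in> I"
    then have "A j i = cnj (A i j)" using herm by blast
    then show "D j i = cnj (D i j)" unfolding D_def by simp
  qed
  have "0 \<le> Re (qf I D x)" for x
  proof (cases "a = 0")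
    case True
    then have "D = A" unfolding D_def zeta_def a_def by simp
    then show ?thesis using assms(1) unfolding psd_def by simp
  next
    case False
    then have apos: "a > 0" using psd_diag(2)[OF assms(1,2,3)] a_def by simp
    define s where "s = complex_of_real (sqrt a)"
    have s0: "s \<noteq> 0" using apos s_def by simp
    have z: "zeta k A i = A i k / s" for i using False unfolding zeta_def a_def s_def by simp
    define S where "S = (\<Sum>i\<in>I - {k}. cnj (x i) * A i k)"
    define y where "y = x(k := cnj (- S / A k k))"
    have Akk0: "A k k \<noteq> 0" using Akk apos by simp
    have "(\<Sum>i\<in>I. cnj (y i) * A i k) = cnj (y k) * A k k + (\<Sum>i\<in>I - {k}. cnj (y i) * A i k)"
      using assms(2,3) by (simp add: sum.remove)
    also have "(\<Sum>i\<in>I - {k}. cnj (y i) * A i k) = S" unfolding S_def y_def by (intro sum.cong) auto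
    also have "cnj (y k) * A k k = - S" using Akk0 unfolding y_def by simp
    finally have v0: "(\<Sum>i\<in>I. cnj (y i) * A i k) = 0" by simp
    have "(\<Sum>i\<in>I. cnj (y i) * zeta k A i) = (\<Sum>i\<in>I. cnj (y i) * A i k) / s"
      unfolding z by (simp add: sum_divide_distrib)
    then have v: "(\<Sum>i\<in>I. cnj (y i) * zeta k A i) = 0" using v0 by simp
    have "qf I D x = qf (I - {k}) D x" using qf_remove[OF assms(2,3), of D x] zero by simp
    also have "\<dots> = qf (I - {k}) D y" by (rule qf_cong) (simp add: y_def)
    also have "\<dots> = qf I D y" using qf_remove[OF assms(2,3), of D y] zero by simp
    also have "\<dots> = qf I A y - qf I (\<lambda>i j. zeta k A i * cnj (zeta k A j)) y"
      unfolding D_def by (rule qf_diff)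
    also have "qf I (\<lambda>i j. zeta k A i * cnj (zeta k A j)) y = 0"
      unfolding qf_rank_one v by simp
    finally show ?thesis using assms(1) unfolding psd_def by simp
  qed
  then show "psd I D" unfolding psd_def using hermD by blast
qed

lemma zeta_bound:
  assumes "psd I A" "finite I" "k \<in> I" "i \<in> I"
  shows "(cmod (zeta k A i))^2 \<le> Re (A i i)"
proof -
  let ?D = "\<lambda>i j. A i j - zeta k A i * cnj (zeta k A j)"
  have "0 \<le> Re (?D i i)" using psd_diag(2)[OF schur_compl(1)[OF assms(1-3)] assms(2,4)] by simp
  then show ?thesis by (simp add: cnj_mult_self)
qed

lemma qf_schur_rank_one:
  "qf I (\<lambda>i j. (u i * cnj (u j)) * Q i j) x = qf I Q (\<lambda>i. cnj (u i) * x i)"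
  unfolding qf_def by (intro sum.cong refl) (simp add: algebra_simps)

lemma schur_product:
  assumes "finite I" "psd I P" "psd I Q"
  shows "psd I (\<lambda>i j. P i j * Q i j)"
  using assms
proof (induction I arbitrary: P rule: finite_psubset_induct)
  case (psubset I)
  show ?case
  proof (cases "I = {}")
    case True then show ?thesis by (simp add: psd_empty)
  next
    case False
    then obtain k where k: "k \<in> I" by blast
    define D where "D = (\<lambda>i j. P i j - zeta k P i * cnj (zeta k P j))"
    have D: "psd I D" "\<forall>j\<in>I. D k j = 0" "\<forall>i\<in>I. D i k = 0"
      using schur_compl[OF psubset.prems(1) psubset.hyps(1) k] unfolding D_def by blast+
    have hermPQ: "herm I (\<lambda>i j. P i j * Q i j)" unfolding herm_def
    proof (intro ballI)
      fix i j assume "i \<in> I" "j \<in> I"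
      then have "P j i = cnj (P i j)" "Q j i = cnj (Q i j)" using psubset.prems unfolding psd_def herm_def by blast+
      then show "P j i * Q j i = cnj (P i j * Q i j)" by simp
    qed
    have IH: "psd (I - {k}) (\<lambda>i j. D i j * Q i j)"
      using psubset.IH[of "I - {k}" D] k psd_subset[OF D(1) _ psubset.hyps(1)]
        psd_subset[OF psubset.prems(2) _ psubset.hyps(1)] by blast
    have "0 \<le> Re (qf I (\<lambda>i j. P i j * Q i j) x)" for x
    proof -
      have eq: "(\<lambda>i j. P i j * Q i j) = (\<lambda>i j. (zeta k P i * cnj (zeta k P j)) * Q i j + D i j * Q i j)"
        unfolding D_def by (simp add: algebra_simps)
      have "qf I (\<lambda>i j. P i j * Q i j) x = qf I Q (\<lambda>i. cnj (zeta k P i) * x i) + qf I (\<lambda>i j. D i j * Q i j) x"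
        unfolding eq qf_add qf_schur_rank_one ..
      also have "qf I (\<lambda>i j. D i j * Q i j) x = qf (I - {k}) (\<lambda>i j. D i j * Q i j) x"
        using qf_remove[OF psubset.hyps(1) k, of "\<lambda>i j. D i j * Q i j"] D(2,3) by simp
      finally show ?thesis using psubset.prems(2) IH unfolding psd_def by simp
    qed
    then show ?thesis using hermPQ unfolding psd_def by blast
  qed
qed




fun hh :: "nat \<Rightarrow> complex list \<Rightarrow> complex" where
  "hh 0 xs = 1"
| "hh (Suc k) [] = 0"
| "hh (Suc k) (x # xs) = hh (Suc k) xs + x * hh k (x # xs)"

lemma hh_single: "hh k [z] = z ^ k"
  by (induction k) auto

lemma hh_swap: "z * hh k (z # S) - w * hh k (w # S) = (z - w) * hh k (z # w # S)"
proof (induction k)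
  case 0 then show ?case by simp
next
  case (Suc k)
  define a where "a = hh (Suc k) S"
  define b where "b = hh k (z # S)"
  define c where "c = hh k (w # S)"
  define d where "d = hh k (z # w # S)"
  have IH: "(z - w) * d = z * b - w * c" using Suc.IH unfolding b_def c_def d_def by simp
  have "z * hh (Suc k) (z # S) - w * hh (Suc k) (w # S) = z * (a + z * b) - w * (a + w * c)"
    unfolding a_def b_def c_def by simp
  also have "\<dots> = (z - w) * (a + w * c) + z * (z * b - w * c)" by (simp add: algebra_simps)
  also have "\<dots> = (z - w) * (a + w * c) + z * ((z - w) * d)" unfolding IH ..
  also have "\<dots> = (z - w) * hh (Suc k) (z # w # S)"
    unfolding a_def c_def d_def by (simp add: algebra_simps)
  finally show ?case .
qed

fun pp :: "complex list \<Rightarrow> complex poly" where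
  "pp [] = 1"
| "pp (w # ws) = pCons 0 (pp ws) - smult w (pp ws)"

lemma poly_pp: "poly (pp ws) z = (\<Prod>w\<leftarrow>ws. (z - w))"
  by (induction ws) (simp_all add: algebra_simps)

lemma poly_pp_zero: "z \<in> set ws \<Longrightarrow> poly (pp ws) z = 0"
  by (induction ws) auto

lemma coeff_pp_Cons: "coeff (pp (w # ws)) j = (if j = 0 then 0 else coeff (pp ws) (j - 1)) - w * coeff (pp ws) j"
  by (cases j) simp_all

lemma coeff_pp_high: "length ws < j \<Longrightarrow> coeff (pp ws) j = 0"
proof (induction ws arbitrary: j)
  case Nil then show ?case by (cases j) auto
next
  case (Cons w ws) then show ?case unfolding coeff_pp_Cons by auto
qed

lemma coeff_pp_top: "coeff (pp ws) (length ws) = 1"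
  by (induction ws) (auto simp: coeff_pp_Cons coeff_pp_high)

lemma coeff_pp_bound:
  assumes "\<forall>w\<in>set ws. cmod w \<le> s" "0 \<le> s"
  shows "cmod (coeff (pp ws) j) \<le> real (length ws choose j) * s ^ (length ws - j)"
  using assms(1)
proof (induction ws arbitrary: j)
  case Nil then show ?case by (cases j) auto
next
  case (Cons w ws)
  define L where "L = length ws"
  have w: "cmod w \<le> s" using Cons.prems by simp
  have IH: "cmod (coeff (pp ws) i) \<le> real (L choose i) * s ^ (L - i)" for i
    using Cons.IH Cons.prems unfolding L_def by simp
  have t2: "cmod (w * coeff (pp ws) i) \<le> s * (real (L choose i) * s ^ (L - i))" for i
    unfolding norm_mult by (rule mult_mono[OF w IH]) (auto simp: assms(2))
  show ?case
  proof (cases j)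
    case 0
    have "cmod (coeff (pp (w # ws)) j) = cmod (w * coeff (pp ws) 0)" using 0 by (simp add: coeff_pp_Cons)
    also have "\<dots> \<le> s * (real (L choose 0) * s ^ (L - 0))" by (rule t2)
    also have "\<dots> = real (length (w # ws) choose j) * s ^ (length (w # ws) - j)"
      using 0 unfolding L_def by simp
    finally show ?thesis .
  next
    case (Suc i)
    have "cmod (coeff (pp (w # ws)) j) = cmod (coeff (pp ws) i - w * coeff (pp ws) (Suc i))"
      using Suc by (simp add: coeff_pp_Cons)
    also have "\<dots> \<le> cmod (coeff (pp ws) i) + cmod (w * coeff (pp ws) (Suc i))" by (rule norm_triangle_ineq4)
    also have "\<dots> \<le> real (L choose i) * s ^ (L - i) + s * (real (L choose Suc i) * s ^ (L - Suc i))"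
      by (intro add_mono IH t2)
    also have "s * (real (L choose Suc i) * s ^ (L - Suc i)) = real (L choose Suc i) * s ^ (L - i)"
    proof (cases "Suc i \<le> L")
      case True
      then have "L - i = Suc (L - Suc i)" by arith
      then show ?thesis by simp
    next
      case False then show ?thesis by simp
    qed
    also have "real (L choose i) * s ^ (L - i) + real (L choose Suc i) * s ^ (L - i)
        = real (length (w # ws) choose j) * s ^ (length (w # ws) - j)"
      using Suc unfolding L_def by (simp add: algebra_simps)
    finally show ?thesis .
  qed
qed

fun Rp :: "complex list \<Rightarrow> nat \<Rightarrow> complex poly" where
  "Rp [] K = 0"
| "Rp (w # ws) K = pCons 0 (Rp ws (K - 1)) + smult (w * hh (K - Suc (length ws)) (w # ws)) (pp ws)"

lemma Rp_inv:
  "length us \<le> K \<Longrightarrow> z ^ K - poly (Rp us K) z = hh (K - length us) (z # us) * poly (pp us) z"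
proof (induction us arbitrary: K)
  case Nil then show ?case by (simp add: hh_single)
next
  case (Cons w ws)
  then obtain K' where K: "K = Suc K'" by (cases K) auto
  define L where "L = length ws"
  have LK: "L \<le> K'" using Cons.prems K L_def by simp
  have IH: "z ^ K' - poly (Rp ws K') z = hh (K' - L) (z # ws) * poly (pp ws) z"
    using Cons.IH LK L_def by simp
  have "z ^ K - poly (Rp (w # ws) K) z
      = z * (z ^ K' - poly (Rp ws K') z) - w * hh (K' - L) (w # ws) * poly (pp ws) z"
    unfolding K L_def by (simp add: algebra_simps)
  also have "\<dots> = (z * hh (K' - L) (z # ws) - w * hh (K' - L) (w # ws)) * poly (pp ws) z"
    unfolding IH by (simp add: algebra_simps)
  also have "\<dots> = hh (K - length (w # ws)) (z # w # ws) * poly (pp (w # ws)) z"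
    unfolding hh_swap K L_def by (simp add: algebra_simps)
  finally show ?case .
qed

lemma Rp_interp: "length us \<le> K \<Longrightarrow> z \<in> set us \<Longrightarrow> poly (Rp us K) z = z ^ K"
  using Rp_inv[of us K z] poly_pp_zero[of z us] by simp

lemma coeff_Rp_Cons:
  "coeff (Rp (w # ws) K) j = (if j = 0 then 0 else coeff (Rp ws (K - 1)) (j - 1))
      + w * hh (K - Suc (length ws)) (w # ws) * coeff (pp ws) j"
  by (cases j) simp_all

lemma coeff_Rp_high: "length us \<le> j \<Longrightarrow> coeff (Rp us K) j = 0"
proof (induction us arbitrary: K j)
  case Nil then show ?case by simp
next
  case (Cons w ws)
  then show ?case unfolding coeff_Rp_Cons using coeff_pp_high[of ws j] by auto
qed

lemma poly_sum_lt:
  fixes p :: "complex poly"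
  assumes "\<forall>j\<ge>n. coeff p j = 0"
  shows "poly p z = (\<Sum>j<n. coeff p j * z ^ j)"
proof (cases "p = 0")
  case True then show ?thesis by simp
next
  case False
  then have "coeff p (degree p) \<noteq> 0" by simp
  then have dn: "degree p < n" using assms by (meson not_le)
  have "poly p z = (\<Sum>j\<le>degree p. coeff p j * z ^ j)" by (rule poly_altdef)
  also have "\<dots> = (\<Sum>j<n. coeff p j * z ^ j)"
    using dn by (intro sum.mono_neutral_left) (auto simp: coeff_eq_0)
  finally show ?thesis .
qed

lemma poly_Rp_sum: "poly (Rp us K) z = (\<Sum>j<length us. coeff (Rp us K) j * z ^ j)"
  by (rule poly_sum_lt) (simp add: coeff_Rp_high)

lemma hh_bound:
  assumes "\<forall>x\<in>set xs. cmod x \<le> s" "0 \<le> s"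
  shows "cmod (hh k xs) \<le> real ((length xs + k - 1) choose k) * s ^ k"
  using assms(1)
proof (induction k xs rule: hh.induct)
  case (1 xs) then show ?case by simp
next
  case (2 k) then show ?case using assms(2) by simp
next
  case (3 k x xs)
  have x: "cmod x \<le> s" using "3.prems" by simp
  have I1: "cmod (hh (Suc k) xs) \<le> real ((length xs + Suc k - 1) choose Suc k) * s ^ Suc k"
    using "3.IH"(1) "3.prems" by simp
  have I2: "cmod (hh k (x # xs)) \<le> real ((length (x # xs) + k - 1) choose k) * s ^ k"
    using "3.IH"(2) "3.prems" by simp
  have "cmod (hh (Suc k) (x # xs)) \<le> cmod (hh (Suc k) xs) + cmod x * cmod (hh k (x # xs))"
    by (simp add: norm_triangle_le norm_mult)
  also have "\<dots> \<le> real ((length xs + Suc k - 1) choose Suc k) * s ^ Suc k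
      + s * (real ((length (x # xs) + k - 1) choose k) * s ^ k)"
    by (intro add_mono I1 mult_mono x I2) (auto simp: assms(2))
  also have "\<dots> = real ((length (x # xs) + Suc k - 1) choose Suc k) * s ^ Suc k"
    by (simp add: algebra_simps)
  finally show ?case .
qed




definition fpoly :: "(nat \<Rightarrow> real) \<Rightarrow> nat \<Rightarrow> real \<Rightarrow> nat \<Rightarrow> complex \<Rightarrow> complex" where
  "fpoly c n \<epsilon> M z = (\<Sum>j<n. complex_of_real (c j) * z ^ j) - complex_of_real \<epsilon> * z ^ M"

lemma cnj_fpoly: "cnj (fpoly c n \<epsilon> M z) = fpoly c n \<epsilon> M (cnj z)"
  by (simp add: fpoly_def)

lemma herm_fpoly:
  assumes "herm I A" shows "herm I (\<lambda>i j. fpoly c n \<epsilon> M (A i j))"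
  unfolding herm_def
proof (intro ballI)
  fix i j assume "i \<in> I" "j \<in> I"
  then have "A j i = cnj (A i j)" using assms unfolding herm_def by blast
  then show "fpoly c n \<epsilon> M (A j i) = cnj (fpoly c n \<epsilon> M (A i j))" by (simp add: cnj_fpoly)
qed

lemma qf_fpoly_rank_one:
  "qf I (\<lambda>i j. fpoly c n \<epsilon> M (u i * cnj (u j))) x =
     complex_of_real ((\<Sum>k<n. c k * (cmod (\<Sum>i\<in>I. cnj (x i) * u i ^ k))^2)
        - \<epsilon> * (cmod (\<Sum>i\<in>I. cnj (x i) * u i ^ M))^2)"
proof -
  define S where "S k = (\<Sum>i\<in>I. cnj (x i) * u i ^ k)" for k
  have pw: "(u i * cnj (u j)) ^ k = u i ^ k * cnj (u j ^ k)" for i j k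
    by (simp add: power_mult_distrib)
  have r1: "qf I (\<lambda>i j. u i ^ k * cnj (u j ^ k)) x = complex_of_real ((cmod (S k))^2)" for k
    unfolding qf_rank_one S_def by (rule cnj_mult_self)
  have "qf I (\<lambda>i j. fpoly c n \<epsilon> M (u i * cnj (u j))) x
      = qf I (\<lambda>i j. (\<Sum>k<n. complex_of_real (c k) * (u i ^ k * cnj (u j ^ k)))) x
        - qf I (\<lambda>i j. complex_of_real \<epsilon> * (u i ^ M * cnj (u j ^ M))) x"
    unfolding fpoly_def pw by (rule qf_diff)
  also have "\<dots> = (\<Sum>k<n. complex_of_real (c k) * complex_of_real ((cmod (S k))^2))
        - complex_of_real \<epsilon> * complex_of_real ((cmod (S M))^2)"
    unfolding qf_sum qf_scale r1 ..
  also have "\<dots> = complex_of_real ((\<Sum>k<n. c k * (cmod (S k))^2) - \<epsilon> * (cmod (S M))^2)"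
    by simp
  finally show ?thesis unfolding S_def .
qed

lemma binom_id:
  assumes "1 \<le> j" "j < n" "n \<le> K"
  shows "(K - 1 choose (j - 1)) * ((K - j - 1) choose (n - j - 1)) + (K - 1 choose (K - n)) * ((n - 1) choose j)
       = (K choose j) * ((K - j - 1) choose (n - j - 1))"
proof -
  obtain K' where K: "K = Suc K'" using assms by (cases K) auto
  obtain j' where j: "j = Suc j'" using assms by (cases j) auto
  have "(K choose j) = (K' choose j') + (K' choose j)" unfolding K j by simp
  moreover have "(K - 1 choose (K - n)) = (K' choose (n - 1))"
    using assms binomial_symmetric[of "n - 1" K'] unfolding K by simp
  moreover have "(K' choose (n - 1)) * ((n - 1) choose j) = (K' choose j) * ((K' - j) choose (n - 1 - j))"
    using assms K by (intro choose_mult) auto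
  moreover have "K - j - 1 = K' - j" "n - j - 1 = n - 1 - j" using K by auto
  ultimately show ?thesis unfolding K j by (simp add: algebra_simps)
qed

lemma coeff_Rp_bound:
  assumes "\<forall>w\<in>set us. cmod w \<le> s" "0 \<le> s" "length us \<le> K" "j < length us"
  shows "cmod (coeff (Rp us K) j) \<le> real (K choose j) * real ((K - j - 1) choose (length us - j - 1)) * s ^ (K - j)"
  using assms(1,3,4)
proof (induction us arbitrary: K j)
  case Nil then show ?case by simp
next
  case (Cons w ws)
  define L where "L = length ws"
  define n where "n = Suc L"
  have w: "cmod w \<le> s" using Cons.prems by simp
  have ws: "\<forall>w\<in>set ws. cmod w \<le> s" using Cons.prems by simp
  have nK: "n \<le> K" using Cons.prems unfolding n_def L_def by simp
  have jn: "j < n" using Cons.prems unfolding n_def L_def by simp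
  have hb: "cmod (hh (K - n) (w # ws)) \<le> real ((K - 1) choose (K - n)) * s ^ (K - n)"
  proof -
    have "cmod (hh (K - n) (w # ws)) \<le> real ((length (w # ws) + (K - n) - 1) choose (K - n)) * s ^ (K - n)"
      by (rule hh_bound) (use Cons.prems assms(2) in auto)
    also have "length (w # ws) + (K - n) - 1 = K - 1" using nK unfolding n_def L_def by simp
    finally show ?thesis .
  qed
  have pb: "cmod (coeff (pp ws) j) \<le> real (L choose j) * s ^ (L - j)"
    using coeff_pp_bound[OF ws assms(2)] unfolding L_def .
  have t2: "cmod (w * hh (K - n) (w # ws) * coeff (pp ws) j)
      \<le> real ((K - 1) choose (K - n)) * real (L choose j) * s ^ (K - j)"
  proof -
    have "cmod (w * hh (K - n) (w # ws) * coeff (pp ws) j)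
        \<le> s * (real ((K - 1) choose (K - n)) * s ^ (K - n)) * (real (L choose j) * s ^ (L - j))"
      unfolding norm_mult by (intro mult_mono w hb pb) (auto simp: assms(2))
    also have "\<dots> = real ((K - 1) choose (K - n)) * real (L choose j) * (s * s ^ (K - n) * s ^ (L - j))"
      by (simp add: algebra_simps)
    also have "s * s ^ (K - n) * s ^ (L - j) = s ^ (K - j)"
    proof -
      have "Suc ((K - n) + (L - j)) = K - j" using nK jn unfolding n_def by arith
      moreover have "s * s ^ (K - n) * s ^ (L - j) = s ^ Suc ((K - n) + (L - j))" by (simp add: power_add)
      ultimately show ?thesis by simp
    qed
    finally show ?thesis .
  qed
  have eq: "coeff (Rp (w # ws) K) j = (if j = 0 then 0 else coeff (Rp ws (K - 1)) (j - 1))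
      + w * hh (K - n) (w # ws) * coeff (pp ws) j"
    unfolding coeff_Rp_Cons n_def L_def ..
  show ?case
  proof (cases j)
    case 0
    have "cmod (coeff (Rp (w # ws) K) j) \<le> real ((K - 1) choose (K - n)) * real (L choose j) * s ^ (K - j)"
      using t2 unfolding eq using 0 by simp
    also have "real ((K - 1) choose (K - n)) * real (L choose j) = real (K choose j) * real ((K - j - 1) choose (length (w # ws) - j - 1))"
      using 0 nK binomial_symmetric[of "n - 1" "K - 1"] unfolding n_def L_def by simp
    finally show ?thesis .
  next
    case (Suc j')
    have IH: "cmod (coeff (Rp ws (K - 1)) j') \<le> real ((K - 1) choose j') * real ((K - 1 - j' - 1) choose (L - j' - 1)) * s ^ (K - 1 - j')"
      using Cons.IH[OF ws, of "K - 1" j'] Cons.prems Suc unfolding L_def by simp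
    have e1: "K - 1 - j' - 1 = K - j - 1" "L - j' - 1 = n - j - 1" "K - 1 - j' = K - j"
      using Suc unfolding n_def by auto
    have IH2: "cmod (coeff (Rp ws (K - 1)) j') \<le> real ((K - 1) choose j') * real ((K - j - 1) choose (n - j - 1)) * s ^ (K - j)"
      using IH unfolding e1 .
    have jj: "j - 1 = j'" using Suc by simp
    have "cmod (coeff (Rp (w # ws) K) j) \<le> cmod (coeff (Rp ws (K - 1)) j') + cmod (w * hh (K - n) (w # ws) * coeff (pp ws) j)"
      unfolding eq using Suc by (simp add: norm_triangle_ineq)
    also have "\<dots> \<le> real ((K - 1) choose j') * real ((K - j - 1) choose (n - j - 1)) * s ^ (K - j)
        + real ((K - 1) choose (K - n)) * real (L choose j) * s ^ (K - j)"
      using IH2 t2 by (rule add_mono)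
    also have "\<dots> = real ((K - 1 choose (j - 1)) * ((K - j - 1) choose (n - j - 1)) + (K - 1 choose (K - n)) * ((n - 1) choose j)) * s ^ (K - j)"
      unfolding jj n_def by (simp add: algebra_simps)
    also have "\<dots> = real (K choose j) * real ((K - j - 1) choose (length (w # ws) - j - 1)) * s ^ (K - j)"
    proof -
      have j1: "1 \<le> j" using Suc by simp
      show ?thesis unfolding binom_id[OF j1 jn nK] unfolding n_def L_def by simp
    qed
    finally show ?thesis .
  qed
qed

lemma coeff_Rp_top:
  "us \<noteq> [] \<Longrightarrow> length us \<le> K \<Longrightarrow> coeff (Rp us K) (length us - 1) = hh (K - length us + 1) us"
proof (induction us arbitrary: K)
  case Nil then show ?case by simp
next
  case (Cons w ws)
  show ?case
  proof (cases "ws = []")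
    case True
    then obtain K' where K: "K = Suc K'" using Cons.prems by (cases K) auto
    show ?thesis using True unfolding K by (simp add: hh_single)
  next
    case False
    define L where "L = length ws"
    have L1: "L \<ge> 1" using False unfolding L_def by (cases ws) auto
    have LK: "Suc L \<le> K" using Cons.prems unfolding L_def by simp
    have IH: "coeff (Rp ws (K - 1)) (L - 1) = hh (K - 1 - L + 1) ws"
      using Cons.IH[OF False] LK unfolding L_def by simp
    have "coeff (Rp (w # ws) K) (length (w # ws) - 1) = coeff (Rp (w # ws) K) L" unfolding L_def by simp
    also have "\<dots> = coeff (Rp ws (K - 1)) (L - 1) + w * hh (K - Suc L) (w # ws) * coeff (pp ws) L"
      unfolding coeff_Rp_Cons using L1 unfolding L_def by simp
    also have "\<dots> = hh (Suc (K - Suc L)) ws + w * hh (K - Suc L) (w # ws)"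
      unfolding IH using coeff_pp_top[of ws] LK L1 unfolding L_def
      by (simp add: Suc_diff_le)
    also have "\<dots> = hh (Suc (K - Suc L)) (w # ws)" by simp
    also have "Suc (K - Suc L) = K - length (w # ws) + 1" using LK unfolding L_def by simp
    finally show ?thesis .
  qed
qed

lemma add_strict_disc:
  assumes "x \<noteq> y" "cmod x \<le> s" "cmod y \<le> s"
  shows "cmod (x + y) < 2 * s"
proof -
  have par: "(cmod (x + y))^2 + (cmod (x - y))^2 = 2 * (cmod x)^2 + 2 * (cmod y)^2"
    by (simp only: cmod_power2) (simp add: power2_eq_square algebra_simps)
  have "cmod (x - y) > 0" using assms by simp
  then have "(cmod (x - y))^2 > 0" by simp
  then have "(cmod (x + y))^2 < 2 * (cmod x)^2 + 2 * (cmod y)^2" using par by linarith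
  also have "\<dots> \<le> 2 * s^2 + 2 * s^2"
    using assms by (intro add_mono mult_left_mono power_mono) auto
  also have "\<dots> = (2 * s)^2" by (simp add: power2_eq_square)
  finally have "(cmod (x + y))^2 < (2 * s)^2" .
  moreover have "0 \<le> 2 * s" using assms(2) norm_ge_zero[of x] by linarith
  ultimately show ?thesis using power2_less_imp_less[of "cmod (x+y)" "2 * s"] by blast
qed

lemma hh_strict:
  assumes "x \<noteq> y" "cmod x \<le> s" "cmod y \<le> s" "\<forall>z\<in>set rest. cmod z \<le> s" "0 < s" "1 \<le> m"
  shows "cmod (hh m (x # y # rest)) < real ((length rest + 2 + m - 1) choose m) * s ^ m"
  using assms(6)
proof (induction m rule: dec_induct)
  case base
  have e: "hh 1 (x # y # rest) = hh 1 rest + (x + y)" by (simp add: numeral_eq_Suc)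
  have hb: "cmod (hh 1 rest) \<le> real (length rest) * s"
    using hh_bound[OF assms(4), of 1] assms(5) by simp
  have "cmod (hh 1 (x # y # rest)) \<le> cmod (hh 1 rest) + cmod (x + y)"
    unfolding e by (rule norm_triangle_ineq)
  also have "\<dots> < real (length rest) * s + 2 * s"
    using hb add_strict_disc[OF assms(1-3)] by linarith
  also have "\<dots> = real ((length rest + 2 + 1 - 1) choose 1) * s ^ 1" by (simp add: algebra_simps)
  finally show ?case .
next
  case (step m)
  have e: "hh (Suc m) (x # y # rest) = hh (Suc m) (y # rest) + x * hh m (x # y # rest)" by simp
  have b1: "cmod (hh (Suc m) (y # rest)) \<le> real ((length (y # rest) + Suc m - 1) choose Suc m) * s ^ Suc m"
    by (rule hh_bound) (use assms in auto)
  have b2: "cmod (x * hh m (x # y # rest)) < s * (real ((length rest + 2 + m - 1) choose m) * s ^ m)"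
  proof -
    have "cmod (x * hh m (x # y # rest)) \<le> s * cmod (hh m (x # y # rest))"
      unfolding norm_mult using assms(2) by (intro mult_right_mono) auto
    also have "\<dots> < s * (real ((length rest + 2 + m - 1) choose m) * s ^ m)"
      using step.IH assms(5) by (intro mult_strict_left_mono) auto
    finally show ?thesis .
  qed
  have "cmod (hh (Suc m) (x # y # rest)) \<le> cmod (hh (Suc m) (y # rest)) + cmod (x * hh m (x # y # rest))"
    unfolding e by (rule norm_triangle_ineq)
  also have "\<dots> < real ((length (y # rest) + Suc m - 1) choose Suc m) * s ^ Suc m
      + s * (real ((length rest + 2 + m - 1) choose m) * s ^ m)"
    using b1 b2 by linarith
  also have "\<dots> = (real ((length rest + m + 1) choose Suc m) + real ((length rest + m + 1) choose m)) * s ^ Suc m"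
    using step.hyps by (simp add: algebra_simps)
  also have "\<dots> = real ((length rest + 2 + Suc m - 1) choose Suc m) * s ^ Suc m"
  proof -
    have "(length rest + 2 + Suc m - 1) = Suc (length rest + m + 1)" by simp
    then show ?thesis by (simp only: binomial_Suc_Suc of_nat_add) (simp add: algebra_simps)
  qed
  finally show ?case .
qed




lemma rank_one_core:
  fixes u x :: "nat \<Rightarrow> complex"
  assumes fin: "finite I" and cardI: "card I = n" and nM: "n \<le> M" and rho: "0 < \<rho>"
    and cpos: "\<forall>j<n. 0 < c j" and ub: "\<forall>i\<in>I. (cmod (u i))^2 \<le> \<rho>"
  defines "us \<equiv> map u (sorted_list_of_set I)"
  defines "S \<equiv> (\<lambda>k. \<Sum>i\<in>I. cnj (x i) * u i ^ k)"
  defines "X \<equiv> (\<Sum>j<n. (cmod (coeff (Rp us M) j))^2 / c j)"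
  shows "(cmod (S M))^2 \<le> X * (\<Sum>j<n. c j * (cmod (S j))^2)" and "X \<le> CC c M n \<rho>"
proof -
  define s where "s = sqrt \<rho>"
  define r where "r j = coeff (Rp us M) j" for j
  have s0: "0 \<le> s" unfolding s_def using rho by simp
  have len: "length us = n" unfolding us_def using fin cardI by simp
  have setus: "set us = u ` I" unfolding us_def using fin by simp
  have ubs: "\<forall>w\<in>set us. cmod w \<le> s" unfolding setus s_def using ub real_le_rsqrt by blast
  have interp: "u i ^ M = (\<Sum>j<n. r j * u i ^ j)" if "i \<in> I" for i
  proof -
    have "u i \<in> set us" using that setus by simp
    then have "poly (Rp us M) (u i) = u i ^ M" using Rp_interp len nM by simp
    then show ?thesis using poly_Rp_sum[of us M "u i"] unfolding r_def len by simp
  qed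
  have SM: "S M = (\<Sum>j<n. r j * S j)"
  proof -
    have "S M = (\<Sum>i\<in>I. cnj (x i) * (\<Sum>j<n. r j * u i ^ j))"
      unfolding S_def using interp by (intro sum.cong) auto
    also have "\<dots> = (\<Sum>i\<in>I. \<Sum>j<n. r j * (cnj (x i) * u i ^ j))"
      by (simp add: sum_distrib_left mult.left_commute)
    also have "\<dots> = (\<Sum>j<n. \<Sum>i\<in>I. r j * (cnj (x i) * u i ^ j))" by (rule sum.swap)
    also have "\<dots> = (\<Sum>j<n. r j * S j)" unfolding S_def by (simp add: sum_distrib_left)
    finally show ?thesis .
  qed
  have n1: "cmod (S M) \<le> (\<Sum>j<n. cmod (r j) * cmod (S j))"
    unfolding SM by (rule order.trans[OF norm_sum]) (simp add: norm_mult)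
  have cs: "(\<Sum>j<n. cmod (r j) * cmod (S j))^2 \<le> X * (\<Sum>j<n. c j * (cmod (S j))^2)"
  proof -
    have eq: "(\<Sum>j<n. cmod (r j) * cmod (S j)) = (\<Sum>j<n. (cmod (r j) / sqrt (c j)) * (sqrt (c j) * cmod (S j)))"
      using cpos by (intro sum.cong) auto
    have a2: "(\<Sum>j<n. (cmod (r j) / sqrt (c j))^2) = X"
      unfolding X_def r_def using cpos by (intro sum.cong) (auto simp: power_divide)
    have b2: "(\<Sum>j<n. (sqrt (c j) * cmod (S j))^2) = (\<Sum>j<n. c j * (cmod (S j))^2)"
      using cpos by (intro sum.cong) (auto simp: power_mult_distrib)
    show ?thesis unfolding eq using Cauchy_Schwarz_ineq_sum[of "\<lambda>j. cmod (r j) / sqrt (c j)" "\<lambda>j. sqrt (c j) * cmod (S j)" "{..<n}"]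
      unfolding a2 b2 .
  qed
  have "(cmod (S M))^2 \<le> (\<Sum>j<n. cmod (r j) * cmod (S j))^2"
    using n1 by (intro power_mono) auto
  then show "(cmod (S M))^2 \<le> X * (\<Sum>j<n. c j * (cmod (S j))^2)" using cs by linarith
  show "X \<le> CC c M n \<rho>"
    unfolding X_def CC_def
  proof (intro sum_mono)
    fix j assume "j \<in> {..<n}"
    then have jn: "j < n" by simp
    define B where "B = real (M choose j) * real ((M - j - 1) choose (n - j - 1))"
    have B0: "0 \<le> B" unfolding B_def by simp
    have rb: "cmod (coeff (Rp us M) j) \<le> B * s ^ (M - j)"
      using coeff_Rp_bound[OF ubs s0, of M j] len nM jn unfolding B_def by simp
    have "(cmod (coeff (Rp us M) j))^2 \<le> (B * s ^ (M - j))^2"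
      using rb by (intro power_mono) auto
    also have "\<dots> = B^2 * \<rho> ^ (M - j)"
      unfolding s_def power_mult_distrib using rho by (simp add: power2_eq_square power_mult_distrib[symmetric])
    also have "\<dots> = real ((M choose j)^2 * ((M - j - 1) choose (n - j - 1))^2) * \<rho> ^ (M - j)"
      unfolding B_def by (simp add: power_mult_distrib)
    finally show "(cmod (coeff (Rp us M) j))^2 / c j \<le> real ((M choose j)^2 * ((M - j - 1) choose (n - j - 1))^2) * \<rho> ^ (M - j) / c j"
      using cpos jn by (intro divide_right_mono) auto
  qed
qed


lemma rank_one_psd:
  fixes u :: "nat \<Rightarrow> complex"
  assumes fin: "finite I" and cardI: "card I = n" and nM: "n \<le> M" and rho: "0 < \<rho>"
    and cpos: "\<forall>j<n. 0 < c j" and ub: "\<forall>i\<in>I. (cmod (u i))^2 \<le> \<rho>"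
    and eps: "0 \<le> \<epsilon>" "\<epsilon> * CC c M n \<rho> \<le> 1"
  shows "psd I (\<lambda>i j. fpoly c n \<epsilon> M (u i * cnj (u j)))"
proof -
  have "0 \<le> Re (qf I (\<lambda>i j. fpoly c n \<epsilon> M (u i * cnj (u j))) x)" for x
  proof -
    define S where "S k = (\<Sum>i\<in>I. cnj (x i) * u i ^ k)" for k
    define X where "X = (\<Sum>j<n. (cmod (coeff (Rp (map u (sorted_list_of_set I)) M) j))^2 / c j)"
    define Y where "Y = (\<Sum>j<n. c j * (cmod (S j))^2)"
    have c1: "(cmod (S M))^2 \<le> X * Y"
      using rank_one_core(1)[OF fin cardI nM rho cpos ub, where x=x] unfolding S_def X_def Y_def by blast
    have c2: "X \<le> CC c M n \<rho>"
      using rank_one_core(2)[OF fin cardI nM rho cpos ub] unfolding X_def by blast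
    have Y0: "0 \<le> Y" unfolding Y_def using cpos by (intro sum_nonneg) auto
    have "\<epsilon> * (cmod (S M))^2 \<le> \<epsilon> * (X * Y)" using c1 eps by (intro mult_left_mono) auto
    also have "\<dots> \<le> \<epsilon> * (CC c M n \<rho> * Y)" using c2 eps Y0 by (intro mult_left_mono mult_right_mono) auto
    also have "\<dots> \<le> Y" using eps Y0 by (metis mult.assoc mult_left_le_one_le mult_nonneg_nonneg order_refl mult_right_mono mult_1)
    finally have "\<epsilon> * (cmod (S M))^2 \<le> Y" .
    then show ?thesis unfolding qf_fpoly_rank_one using S_def Y_def by simp
  qed
  moreover have "herm I (\<lambda>i j. fpoly c n \<epsilon> M (u i * cnj (u j)))"
    by (rule herm_fpoly[OF herm_rank_one])
  ultimately show ?thesis unfolding psd_def by blast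
qed

lemma vandermonde:
  fixes u x :: "nat \<Rightarrow> complex"
  assumes fin: "finite I" and inj: "inj_on u I" and i0: "i0 \<in> I" and x0: "x i0 \<noteq> 0"
  shows "\<exists>j<card I. (\<Sum>i\<in>I. cnj (x i) * u i ^ j) \<noteq> 0"
proof (rule ccontr)
  assume "\<not> ?thesis"
  then have all0: "\<forall>j<card I. (\<Sum>i\<in>I. cnj (x i) * u i ^ j) = 0" by blast
  define ws where "ws = map u (sorted_list_of_set (I - {i0}))"
  define L where "L = pp ws"
  have lenws: "length ws = card I - 1" unfolding ws_def using fin i0 by simp
  have cI: "card I \<ge> 1" using fin i0 by (metis card_0_eq empty_iff less_one not_le)
  have setws: "set ws = u ` (I - {i0})" unfolding ws_def using fin by simp
  have polyL: "poly L z = (\<Sum>j<card I. coeff L j * z ^ j)" for z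
    unfolding L_def by (rule poly_sum_lt) (use coeff_pp_high lenws cI in auto)
  have "(\<Sum>j<card I. coeff L j * (\<Sum>i\<in>I. cnj (x i) * u i ^ j)) = (\<Sum>i\<in>I. cnj (x i) * poly L (u i))"
    unfolding polyL by (simp add: sum_distrib_left sum_distrib_right mult.left_commute sum.swap[of _ "{..<card I}"])
  also have "\<dots> = cnj (x i0) * poly L (u i0) + (\<Sum>i\<in>I - {i0}. cnj (x i) * poly L (u i))"
    using fin i0 by (simp add: sum.remove)
  also have "(\<Sum>i\<in>I - {i0}. cnj (x i) * poly L (u i)) = 0"
    unfolding L_def using setws by (intro sum.neutral) (auto simp: poly_pp_zero)
  finally have eq: "(\<Sum>j<card I. coeff L j * (\<Sum>i\<in>I. cnj (x i) * u i ^ j)) = cnj (x i0) * poly L (u i0)" by simp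
  have "u i0 \<notin> set ws" unfolding setws using inj i0 by (auto simp: inj_on_def)
  then have "poly L (u i0) \<noteq> 0" unfolding L_def poly_pp prod_list_zero_iff by auto
  then have "cnj (x i0) * poly L (u i0) \<noteq> 0" using x0 by simp
  moreover have "(\<Sum>j<card I. coeff L j * (\<Sum>i\<in>I. cnj (x i) * u i ^ j)) = 0" using all0 by simp
  ultimately show False using eq by simp
qed

lemma rank_one_strict:
  fixes u x :: "nat \<Rightarrow> complex"
  assumes fin: "finite I" and cardI: "card I = n" and nM: "n \<le> M" and rho: "0 < \<rho>"
    and cpos: "\<forall>j<n. 0 < c j" and ub: "\<forall>i\<in>I. (cmod (u i))^2 \<le> \<rho>"
    and eps: "0 \<le> \<epsilon>" "\<epsilon> * CC c M n \<rho> \<le> 1"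
    and inj: "inj_on u I" and n2: "2 \<le> n" and i0: "i0 \<in> I" and x0: "x i0 \<noteq> 0"
  shows "0 < Re (qf I (\<lambda>i j. fpoly c n \<epsilon> M (u i * cnj (u j))) x)"
proof -
  define us where "us = map u (sorted_list_of_set I)"
  define S where "S k = (\<Sum>i\<in>I. cnj (x i) * u i ^ k)" for k
  define X where "X = (\<Sum>j<n. (cmod (coeff (Rp us M) j))^2 / c j)"
  define Y where "Y = (\<Sum>j<n. c j * (cmod (S j))^2)"
  define s where "s = sqrt \<rho>"
  have s0: "0 < s" unfolding s_def using rho by simp
  have c1: "(cmod (S M))^2 \<le> X * Y"
    using rank_one_core(1)[OF fin cardI nM rho cpos ub, where x=x] unfolding S_def X_def Y_def us_def by blast
  have len: "length us = n" unfolding us_def using fin cardI by simp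
  have setus: "set us = u ` I" unfolding us_def using fin by simp
  have dist: "distinct us" unfolding us_def using fin inj by (simp add: distinct_map)
  have ubs: "\<forall>w\<in>set us. cmod w \<le> s" unfolding setus s_def using ub real_le_rsqrt by blast
  obtain a b rest where abr: "us = a # b # rest" using len n2
    by (metis One_nat_def Suc_1 Suc_le_length_iff)
  have ab: "a \<noteq> b" using dist abr by auto
  have X_lt: "X < CC c M n \<rho>"
    unfolding X_def CC_def
  proof (rule sum_strict_mono_ex1)
    show "finite {..<n}" by simp
    show "\<forall>j\<in>{..<n}. (cmod (coeff (Rp us M) j))^2 / c j \<le> real ((M choose j)^2 * ((M - j - 1) choose (n - j - 1))^2) * \<rho> ^ (M - j) / c j"
    proof
      fix j assume "j \<in> {..<n}"
      then have jn: "j < n" by simp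
      define B where "B = real (M choose j) * real ((M - j - 1) choose (n - j - 1))"
      have rb: "cmod (coeff (Rp us M) j) \<le> B * s ^ (M - j)"
        using coeff_Rp_bound[OF ubs less_imp_le[OF s0], of M j] len nM jn unfolding B_def by simp
      have "(cmod (coeff (Rp us M) j))^2 \<le> (B * s ^ (M - j))^2"
        using rb by (intro power_mono) auto
      also have "\<dots> = B^2 * \<rho> ^ (M - j)"
        unfolding s_def power_mult_distrib using rho by (simp add: power2_eq_square power_mult_distrib[symmetric])
      also have "\<dots> = real ((M choose j)^2 * ((M - j - 1) choose (n - j - 1))^2) * \<rho> ^ (M - j)"
        unfolding B_def by (simp add: power_mult_distrib)
      finally show "(cmod (coeff (Rp us M) j))^2 / c j \<le> real ((M choose j)^2 * ((M - j - 1) choose (n - j - 1))^2) * \<rho> ^ (M - j) / c j"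
        using cpos jn by (intro divide_right_mono) auto
    qed
    show "\<exists>j\<in>{..<n}. (cmod (coeff (Rp us M) j))^2 / c j < real ((M choose j)^2 * ((M - j - 1) choose (n - j - 1))^2) * \<rho> ^ (M - j) / c j"
    proof (intro bexI)
      define j where "j = n - 1"
      have jn: "j < n" unfolding j_def using n2 by simp
      have ne: "us \<noteq> []" using abr by simp
      have top: "coeff (Rp us M) j = hh (M - n + 1) us"
        using coeff_Rp_top[OF ne] len nM unfolding j_def by metis
      have m1: "1 \<le> M - n + 1" by simp
      have st0: "cmod (hh (M - n + 1) (a # b # rest)) < real ((length rest + 2 + (M - n + 1) - 1) choose (M - n + 1)) * s ^ (M - n + 1)"
        by (rule hh_strict[OF ab _ _ _ s0 m1]) (use ubs abr in auto)
      have e1: "length rest + 2 + (M - n + 1) - 1 = M" using len abr nM by simp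
      have e2: "(M choose (M - n + 1)) = (M choose j)"
        unfolding j_def using binomial_symmetric[of "n - 1" M] nM n2 by (simp add: Suc_diff_le)
      have e3: "M - n + 1 = M - j" unfolding j_def using nM n2 by simp
      have st: "cmod (coeff (Rp us M) j) < real (M choose j) * s ^ (M - j)"
        using st0 unfolding top abr[symmetric] e1 e2 by (simp only: e3)
      have "(cmod (coeff (Rp us M) j))^2 < (real (M choose j) * s ^ (M - j))^2"
        using st by (intro power_strict_mono) auto
      also have "\<dots> = real ((M choose j)^2 * ((M - j - 1) choose (n - j - 1))^2) * \<rho> ^ (M - j)"
        unfolding j_def s_def power_mult_distrib using rho n2
        by (simp add: power2_eq_square power_mult_distrib[symmetric])
      finally show "(cmod (coeff (Rp us M) j))^2 / c j < real ((M choose j)^2 * ((M - j - 1) choose (n - j - 1))^2) * \<rho> ^ (M - j) / c j"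
        using cpos jn by (intro divide_strict_right_mono) auto
      show "j \<in> {..<n}" using jn by simp
    qed
  qed
  obtain j where jn: "j < n" and Sj: "S j \<noteq> 0"
    using vandermonde[of I u i0 x, OF fin inj i0 x0] cardI unfolding S_def by blast
  have Ypos: "0 < Y" unfolding Y_def
    by (rule sum_pos2[where i=j]) (use jn Sj cpos in auto)
  have X0: "0 \<le> X" unfolding X_def using cpos by (intro sum_nonneg) auto
  have "\<epsilon> * (cmod (S M))^2 < Y"
  proof (cases "\<epsilon> = 0")
    case True then show ?thesis using Ypos by simp
  next
    case False
    then have ep: "0 < \<epsilon>" using eps by simp
    have "\<epsilon> * (cmod (S M))^2 \<le> \<epsilon> * (X * Y)" using c1 ep by (intro mult_left_mono) auto
    also have "\<dots> < \<epsilon> * (CC c M n \<rho> * Y)" using X_lt ep Ypos by simp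
    also have "\<dots> = (\<epsilon> * CC c M n \<rho>) * Y" by simp
    also have "\<dots> \<le> Y" using eps Ypos X0 X_lt by (intro mult_left_le_one_le) auto
    finally show ?thesis .
  qed
  then show ?thesis unfolding qf_fpoly_rank_one using S_def Y_def by simp
qed




lemma fpoly_deriv:
  "(fpoly c n \<epsilon> M has_field_derivative fpoly (\<lambda>j. real (Suc j) * c (Suc j)) (n - 1) (real M * \<epsilon>) (M - 1) z) (at z)"
proof -
  have d: "(fpoly c n \<epsilon> M has_field_derivative
      (\<Sum>j<n. complex_of_real (c j) * (of_nat j * z ^ (j - 1))) - complex_of_real \<epsilon> * (of_nat M * z ^ (M - 1))) (at z)"
    unfolding fpoly_def[abs_def]
    by (auto intro!: derivative_eq_intros DERIV_sum sum.cong simp: ac_simps)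
  have "(\<Sum>j<n. complex_of_real (c j) * (of_nat j * z ^ (j - 1)))
      = (\<Sum>j<n - 1. complex_of_real (real (Suc j) * c (Suc j)) * z ^ j)"
  proof (cases n)
    case 0 then show ?thesis by simp
  next
    case (Suc n')
    show ?thesis unfolding Suc sum.lessThan_Suc_shift by (simp add: algebra_simps)
  qed
  then show ?thesis using d unfolding fpoly_def by (simp add: algebra_simps)
qed


lemma mono_step:
  fixes F F' :: "complex \<Rightarrow> complex"
  assumes fin: "finite I" and k: "k \<in> I" and psdD: "psd I D"
    and Dk: "\<forall>j\<in>I. D k j = 0" "\<forall>i\<in>I. D i k = 0"
    and G: "\<And>t. 0 \<le> t \<Longrightarrow> t \<le> 1 \<Longrightarrow> psd (I - {k}) (\<lambda>i j. F' (B i j + complex_of_real t * D i j))"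
    and deriv: "\<And>z. (F has_field_derivative F' z) (at z)"
  shows "Re (qf I (\<lambda>i j. F (B i j)) x) \<le> Re (qf I (\<lambda>i j. F (B i j + D i j)) x)"
proof -
  define \<Phi> where "\<Phi> w = qf I (\<lambda>i j. F (B i j + w * D i j)) x" for w
  define \<Phi>' where "\<Phi>' w = qf I (\<lambda>i j. F' (B i j + w * D i j) * D i j) x" for w
  have dPhi: "(\<Phi> has_field_derivative \<Phi>' w) (at w)" for w
  proof -
    have "((\<lambda>w. \<Sum>i\<in>I. \<Sum>j\<in>I. cnj (x i) * F (B i j + w * D i j) * x j) has_field_derivative
        (\<Sum>i\<in>I. \<Sum>j\<in>I. cnj (x i) * (F' (B i j + w * D i j) * D i j) * x j)) (at w)"
    proof (intro DERIV_sum DERIV_cmult_right DERIV_cmult)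
      fix i j
      have "((\<lambda>w. B i j + w * D i j) has_field_derivative D i j) (at w)"
        by (auto intro!: derivative_eq_intros)
      then show "((\<lambda>w. F (B i j + w * D i j)) has_field_derivative F' (B i j + w * D i j) * D i j) (at w)"
        by (rule DERIV_chain2[OF deriv])
    qed
    then show ?thesis unfolding \<Phi>_def[abs_def] \<Phi>'_def qf_def by (simp add: mult.assoc)
  qed
  define \<phi> where "\<phi> t = Re (\<Phi> (complex_of_real t))" for t
  have dphi: "(\<phi> has_real_derivative Re (\<Phi>' (complex_of_real t))) (at t)" for t
    unfolding \<phi>_def[abs_def]
    by (rule has_field_derivative_Re, rule has_vector_derivative_real_field, rule dPhi)
  obtain \<xi> where \<xi>: "0 < \<xi>" "\<xi> < 1" and mvt: "\<phi> 1 - \<phi> 0 = (1 - 0) * Re (\<Phi>' (complex_of_real \<xi>))"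
    using MVT2[of 0 1 \<phi> "\<lambda>t. Re (\<Phi>' (complex_of_real t))"] dphi by auto
  have "0 \<le> Re (\<Phi>' (complex_of_real \<xi>))"
  proof -
    let ?G = "\<lambda>i j. F' (B i j + complex_of_real \<xi> * D i j)"
    have "psd (I - {k}) (\<lambda>i j. D i j * ?G i j)"
      by (rule schur_product) (use fin psd_subset[OF psdD _ fin] G \<xi> in auto)
    moreover have "\<Phi>' (complex_of_real \<xi>) = qf (I - {k}) (\<lambda>i j. D i j * ?G i j) x"
      unfolding \<Phi>'_def using qf_remove[OF fin k, of "\<lambda>i j. D i j * ?G i j" x] Dk
      by (simp add: mult.commute)
    ultimately show ?thesis unfolding psd_def by simp
  qed
  then have "\<phi> 0 \<le> \<phi> 1" using mvt by simp
  then show ?thesis unfolding \<phi>_def \<Phi>_def by simp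
qed

lemma aux_div: "(a::real) * (x * y / (s * t)) = a * x / s * (y / t)"
  by (simp add: divide_inverse ac_simps)

lemma CC_comp:
  assumes cpos: "\<forall>j<Suc n. 0 < c j" and nM: "Suc n \<le> M" and rho: "0 < \<rho>"
  shows "real M * CC (\<lambda>j. real (Suc j) * c (Suc j)) (M - 1) n \<rho> \<le> CC c M (Suc n) \<rho>"
proof -
  define T where "T j = real ((M choose j)^2 * ((M - j - 1) choose (Suc n - j - 1))^2) * \<rho> ^ (M - j) / c j" for j
  have T0: "0 \<le> T 0" unfolding T_def using cpos[rule_format, of 0] rho by simp
  have "real M * CC (\<lambda>j. real (Suc j) * c (Suc j)) (M - 1) n \<rho>
      = (\<Sum>j<n. real M * (real ((M - 1 choose j)^2 * ((M - 1 - j - 1) choose (n - j - 1))^2) * \<rho> ^ (M - 1 - j) / (real (Suc j) * c (Suc j))))"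
    unfolding CC_def by (simp add: sum_distrib_left)
  also have "\<dots> \<le> (\<Sum>j<n. T (Suc j))"
  proof (rule sum_mono)
    fix j assume "j \<in> {..<n}"
    then have jn: "j < n" by simp
    obtain M' where M': "M = Suc M'" using nM by (cases M) auto
    define b where "b = real (M' choose j)"
    define B where "B = real (M choose Suc j)"
    define P where "P = real (((M - Suc j - 1) choose (n - j - 1))^2) * \<rho> ^ (M - Suc j) / c (Suc j)"
    have cj: "0 < c (Suc j)" using cpos jn by simp
    have P0: "0 \<le> P" unfolding P_def using cj rho by simp
    have id: "real M * b = real (Suc j) * B"
    proof -
      have id0: "real (Suc M' * (M' choose j)) = real ((Suc M' choose Suc j) * Suc j)"
        by (simp only: Suc_times_binomial_eq)
      show ?thesis unfolding b_def B_def M' using id0 by (simp only: of_nat_mult ac_simps)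
    qed
    have jM: "real (Suc j) \<le> real M" using jn nM by simp
    have b0: "0 \<le> b" unfolding b_def by simp
    have bB: "b \<le> B"
    proof -
      have "real (Suc j) * b \<le> real M * b" using jM b0 by (intro mult_right_mono) auto
      also have "\<dots> = real (Suc j) * B" by (rule id)
      finally show ?thesis by simp
    qed
    have e1: "M - 1 - j - 1 = M - Suc j - 1" by simp
    have e2: "M - 1 - j = M - Suc j" by simp
    have e3: "M - 1 = M'" using M' by simp
    have h: "real ((M' choose j)^2 * W^2) = b * b * real (W^2)" for W unfolding b_def by (simp add: power2_eq_square)
    have "real M * (real ((M - 1 choose j)^2 * ((M - 1 - j - 1) choose (n - j - 1))^2) * \<rho> ^ (M - 1 - j) / (real (Suc j) * c (Suc j)))
        = (real M * b) * b / real (Suc j) * P"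
      unfolding e1 unfolding e2 unfolding e3 h P_def by (simp add: divide_inverse ac_simps)
    also have "\<dots> = B * b * P" unfolding id by simp
    also have "\<dots> \<le> B * B * P" using bB P0 B_def by (intro mult_right_mono mult_left_mono) auto
    also have "\<dots> = T (Suc j)" unfolding T_def B_def P_def by (simp add: power2_eq_square)
    finally show "real M * (real ((M - 1 choose j)^2 * ((M - 1 - j - 1) choose (n - j - 1))^2) * \<rho> ^ (M - 1 - j) / (real (Suc j) * c (Suc j))) \<le> T (Suc j)" .
  qed
  also have "\<dots> \<le> T 0 + (\<Sum>j<n. T (Suc j))" using T0 by simp
  also have "\<dots> = CC c M (Suc n) \<rho>" unfolding CC_def T_def by (simp only: sum.lessThan_Suc_shift)
  finally show ?thesis .
qed




lemma psd_comb:
  assumes "psd I B" "psd I D" "0 \<le> t"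
  shows "psd I (\<lambda>i j. B i j + complex_of_real t * D i j)"
proof -
  have "herm I (\<lambda>i j. B i j + complex_of_real t * D i j)" unfolding herm_def
  proof (intro ballI)
    fix i j assume "i \<in> I" "j \<in> I"
    then have "B j i = cnj (B i j)" "D j i = cnj (D i j)" using assms unfolding psd_def herm_def by blast+
    then show "B j i + complex_of_real t * D j i = cnj (B i j + complex_of_real t * D i j)" by simp
  qed
  moreover have "0 \<le> Re (qf I (\<lambda>i j. B i j + complex_of_real t * D i j) x)" for x
  proof -
    have "Re (qf I (\<lambda>i j. B i j + complex_of_real t * D i j) x) = Re (qf I B x) + t * Re (qf I D x)"
      unfolding qf_add qf_scale by simp
    then show ?thesis using assms unfolding psd_def by simp
  qed
  ultimately show ?thesis unfolding psd_def by blast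
qed

lemma mainG:
  assumes rho: "0 < \<rho>"
  shows "finite I \<Longrightarrow> card I = n \<Longrightarrow> n \<le> M \<Longrightarrow> (\<forall>j<n. 0 < c j) \<Longrightarrow> 0 \<le> \<epsilon> \<Longrightarrow>
    \<epsilon> * CC c M n \<rho> \<le> 1 \<Longrightarrow> psd I A \<Longrightarrow> (\<forall>i\<in>I. \<forall>j\<in>I. cmod (A i j) \<le> \<rho>) \<Longrightarrow>
    psd I (\<lambda>i j. fpoly c n \<epsilon> M (A i j))"
proof (induction n arbitrary: I M c \<epsilon> A)
  case 0 then show ?case by (simp add: psd_empty)
next
  case (Suc n)
  note fin = Suc.prems(1) and cardI = Suc.prems(2) and nM = Suc.prems(3) and cpos = Suc.prems(4)
    and eps = Suc.prems(5,6) and psdA = Suc.prems(7) and Ab = Suc.prems(8)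
  obtain k where k: "k \<in> I" using cardI by (metis card.empty ex_in_conv nat.distinct(1))
  define z where "z = zeta k A"
  define B where "B i j = z i * cnj (z j)" for i j
  define D where "D i j = A i j - B i j" for i j
  have D: "psd I D" "\<forall>j\<in>I. D k j = 0" "\<forall>i\<in>I. D i k = 0"
    using schur_compl[OF psdA fin k] unfolding D_def B_def z_def by blast+
  have zb: "(cmod (z i))^2 \<le> \<rho>" if "i \<in> I" for i
  proof -
    have "(cmod (z i))^2 \<le> Re (A i i)" unfolding z_def by (rule zeta_bound[OF psdA fin k that])
    also have "\<dots> \<le> cmod (A i i)" by (rule complex_Re_le_cmod)
    also have "\<dots> \<le> \<rho>" using Ab that by blast
    finally show ?thesis .
  qed
  have zb1: "cmod (z i) \<le> sqrt \<rho>" if "i \<in> I" for i using zb[OF that] real_le_rsqrt by blast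
  have Bb: "cmod (B i j) \<le> \<rho>" if "i \<in> I" "j \<in> I" for i j
  proof -
    have "cmod (B i j) = cmod (z i) * cmod (z j)" unfolding B_def by (simp add: norm_mult)
    also have "\<dots> \<le> sqrt \<rho> * sqrt \<rho>" using zb1 that rho by (intro mult_mono) auto
    also have "\<dots> = \<rho>" using rho by simp
    finally show ?thesis .
  qed
  have psdB: "psd I B" unfolding B_def by (rule psd_rank_one)
  have AB: "A i j = B i j + D i j" for i j unfolding D_def by simp
  have R1: "psd I (\<lambda>i j. fpoly c (Suc n) \<epsilon> M (B i j))"
    unfolding B_def by (rule rank_one_psd[OF fin cardI nM rho cpos _ eps]) (use zb in auto)
  define c' where "c' j = real (Suc j) * c (Suc j)" for j
  define \<epsilon>' where "\<epsilon>' = real M * \<epsilon>"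
  have G: "psd (I - {k}) (\<lambda>i j. fpoly c' n \<epsilon>' (M - 1) (B i j + complex_of_real t * D i j))"
    if t: "0 \<le> t" "t \<le> 1" for t
  proof -
    let ?C = "\<lambda>i j. B i j + complex_of_real t * D i j"
    have finI: "finite (I - {k})" using fin by simp
    have cardI': "card (I - {k}) = n" using fin k cardI by simp
    have nM': "n \<le> M - 1" using nM by simp
    have cpos': "\<forall>j<n. 0 < c' j" using cpos unfolding c'_def by simp
    have eps1: "0 \<le> \<epsilon>'" using eps unfolding \<epsilon>'_def by simp
    have eps2: "\<epsilon>' * CC c' (M - 1) n \<rho> \<le> 1"
    proof -
      have "\<epsilon>' * CC c' (M - 1) n \<rho> = \<epsilon> * (real M * CC c' (M - 1) n \<rho>)" unfolding \<epsilon>'_def by simp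
      also have "\<dots> \<le> \<epsilon> * CC c M (Suc n) \<rho>"
        using CC_comp[OF cpos nM rho] eps unfolding c'_def by (intro mult_left_mono) auto
      also have "\<dots> \<le> 1" using eps by simp
      finally show ?thesis .
    qed
    have psdC: "psd (I - {k}) ?C"
      using psd_subset[OF psd_comb[OF psdB D(1) t(1)] _ fin] by blast
    have Cb: "\<forall>i\<in>I - {k}. \<forall>j\<in>I - {k}. cmod (?C i j) \<le> \<rho>"
    proof (intro ballI)
      fix i j assume "i \<in> I - {k}" "j \<in> I - {k}"
      then have ij: "i \<in> I" "j \<in> I" by auto
      have eq: "?C i j = complex_of_real (1 - t) * B i j + complex_of_real t * A i j"
        unfolding AB by (simp add: algebra_simps)
      have "cmod (?C i j) \<le> cmod (complex_of_real (1 - t) * B i j) + cmod (complex_of_real t * A i j)"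
        unfolding eq by (rule norm_triangle_ineq)
      also have "\<dots> = (1 - t) * cmod (B i j) + t * cmod (A i j)"
        unfolding norm_mult norm_of_real using t by simp
      also have "\<dots> \<le> (1 - t) * \<rho> + t * \<rho>"
        using t Bb[OF ij] Ab ij by (intro add_mono mult_left_mono) auto
      also have "\<dots> = \<rho>" by (simp add: algebra_simps)
      finally show "cmod (?C i j) \<le> \<rho>" .
    qed
    show ?thesis by (rule Suc.IH[OF finI cardI' nM' cpos' eps1 eps2 psdC Cb])
  qed
  have mono: "Re (qf I (\<lambda>i j. fpoly c (Suc n) \<epsilon> M (B i j)) x) \<le> Re (qf I (\<lambda>i j. fpoly c (Suc n) \<epsilon> M (B i j + D i j)) x)" for x
  proof (rule mono_step[OF fin k D(1) D(2) D(3)])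
    show "psd (I - {k}) (\<lambda>i j. fpoly c' n \<epsilon>' (M - 1) (B i j + complex_of_real t * D i j))" if "0 \<le> t" "t \<le> 1" for t
      using G that by blast
    show "(fpoly c (Suc n) \<epsilon> M has_field_derivative fpoly c' n \<epsilon>' (M - 1) z) (at z)" for z
      using fpoly_deriv[of c "Suc n" \<epsilon> M z] unfolding c'_def \<epsilon>'_def by simp
  qed
  have "0 \<le> Re (qf I (\<lambda>i j. fpoly c (Suc n) \<epsilon> M (A i j)) x)" for x
    using mono[of x] R1 unfolding psd_def AB[symmetric] by (meson order.trans)
  moreover have "herm I (\<lambda>i j. fpoly c (Suc n) \<epsilon> M (A i j))"
    using psdA herm_fpoly unfolding psd_def by blast
  ultimately show ?case unfolding psd_def by blast
qed




lemma decomp_mono: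
  assumes rho: "0 < \<rho>" and fin: "finite I" and cardI: "card I = Suc n" and nM: "Suc n \<le> M"
    and cpos: "\<forall>j<Suc n. 0 < c j" and eps: "0 \<le> \<epsilon>" "\<epsilon> * CC c M (Suc n) \<rho> \<le> 1"
    and psdA: "psd I A" and Ab: "\<forall>i\<in>I. \<forall>j\<in>I. cmod (A i j) \<le> \<rho>" and k: "k \<in> I"
  shows "Re (qf I (\<lambda>i j. fpoly c (Suc n) \<epsilon> M (zeta k A i * cnj (zeta k A j))) x)
          \<le> Re (qf I (\<lambda>i j. fpoly c (Suc n) \<epsilon> M (A i j)) x)"
    and "\<forall>i\<in>I. (cmod (zeta k A i))^2 \<le> \<rho>"
proof -
  define z where "z = zeta k A"
  define B where "B i j = z i * cnj (z j)" for i j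
  define D where "D i j = A i j - B i j" for i j
  have D: "psd I D" "\<forall>j\<in>I. D k j = 0" "\<forall>i\<in>I. D i k = 0"
    using schur_compl[OF psdA fin k] unfolding D_def B_def z_def by blast+
  have zb: "(cmod (z i))^2 \<le> \<rho>" if "i \<in> I" for i
  proof -
    have "(cmod (z i))^2 \<le> Re (A i i)" unfolding z_def by (rule zeta_bound[OF psdA fin k that])
    also have "\<dots> \<le> cmod (A i i)" by (rule complex_Re_le_cmod)
    also have "\<dots> \<le> \<rho>" using Ab that by blast
    finally show ?thesis .
  qed
  then show "\<forall>i\<in>I. (cmod (zeta k A i))^2 \<le> \<rho>" unfolding z_def by blast
  have zb1: "cmod (z i) \<le> sqrt \<rho>" if "i \<in> I" for i using zb[OF that] real_le_rsqrt by blast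
  have Bb: "cmod (B i j) \<le> \<rho>" if "i \<in> I" "j \<in> I" for i j
  proof -
    have "cmod (B i j) = cmod (z i) * cmod (z j)" unfolding B_def by (simp add: norm_mult)
    also have "\<dots> \<le> sqrt \<rho> * sqrt \<rho>" using zb1 that rho by (intro mult_mono) auto
    also have "\<dots> = \<rho>" using rho by simp
    finally show ?thesis .
  qed
  have psdB: "psd I B" unfolding B_def by (rule psd_rank_one)
  have AB: "A i j = B i j + D i j" for i j unfolding D_def by simp
  define c' where "c' j = real (Suc j) * c (Suc j)" for j
  define \<epsilon>' where "\<epsilon>' = real M * \<epsilon>"
  have G: "psd (I - {k}) (\<lambda>i j. fpoly c' n \<epsilon>' (M - 1) (B i j + complex_of_real t * D i j))"
    if t: "0 \<le> t" "t \<le> 1" for t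
  proof -
    let ?C = "\<lambda>i j. B i j + complex_of_real t * D i j"
    have finI: "finite (I - {k})" using fin by simp
    have cardI': "card (I - {k}) = n" using fin k cardI by simp
    have nM': "n \<le> M - 1" using nM by simp
    have cpos': "\<forall>j<n. 0 < c' j" using cpos unfolding c'_def by simp
    have eps1: "0 \<le> \<epsilon>'" using eps unfolding \<epsilon>'_def by simp
    have eps2: "\<epsilon>' * CC c' (M - 1) n \<rho> \<le> 1"
    proof -
      have "\<epsilon>' * CC c' (M - 1) n \<rho> = \<epsilon> * (real M * CC c' (M - 1) n \<rho>)" unfolding \<epsilon>'_def by simp
      also have "\<dots> \<le> \<epsilon> * CC c M (Suc n) \<rho>"
        using CC_comp[OF cpos nM rho] eps unfolding c'_def by (intro mult_left_mono) auto
      also have "\<dots> \<le> 1" using eps by simp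
      finally show ?thesis .
    qed
    have psdC: "psd (I - {k}) ?C"
      using psd_subset[OF psd_comb[OF psdB D(1) t(1)] _ fin] by blast
    have Cb: "\<forall>i\<in>I - {k}. \<forall>j\<in>I - {k}. cmod (?C i j) \<le> \<rho>"
    proof (intro ballI)
      fix i j assume "i \<in> I - {k}" "j \<in> I - {k}"
      then have ij: "i \<in> I" "j \<in> I" by auto
      have eq: "?C i j = complex_of_real (1 - t) * B i j + complex_of_real t * A i j"
        unfolding AB by (simp add: algebra_simps)
      have "cmod (?C i j) \<le> cmod (complex_of_real (1 - t) * B i j) + cmod (complex_of_real t * A i j)"
        unfolding eq by (rule norm_triangle_ineq)
      also have "\<dots> = (1 - t) * cmod (B i j) + t * cmod (A i j)"
        unfolding norm_mult norm_of_real using t by simp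
      also have "\<dots> \<le> (1 - t) * \<rho> + t * \<rho>"
        using t Bb[OF ij] Ab ij by (intro add_mono mult_left_mono) auto
      also have "\<dots> = \<rho>" by (simp add: algebra_simps)
      finally show "cmod (?C i j) \<le> \<rho>" .
    qed
    show ?thesis by (rule mainG[OF rho finI cardI' nM' cpos' eps1 eps2 psdC Cb])
  qed
  have "Re (qf I (\<lambda>i j. fpoly c (Suc n) \<epsilon> M (B i j)) x) \<le> Re (qf I (\<lambda>i j. fpoly c (Suc n) \<epsilon> M (B i j + D i j)) x)"
  proof (rule mono_step[OF fin k D(1) D(2) D(3)])
    show "psd (I - {k}) (\<lambda>i j. fpoly c' n \<epsilon>' (M - 1) (B i j + complex_of_real t * D i j))" if "0 \<le> t" "t \<le> 1" for t
      using G that by blast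
    show "(fpoly c (Suc n) \<epsilon> M has_field_derivative fpoly c' n \<epsilon>' (M - 1) z) (at z)" for z
      using fpoly_deriv[of c "Suc n" \<epsilon> M z] unfolding c'_def \<epsilon>'_def by simp
  qed
  then have "Re (qf I (\<lambda>i j. fpoly c (Suc n) \<epsilon> M (B i j)) x) \<le> Re (qf I (\<lambda>i j. fpoly c (Suc n) \<epsilon> M (A i j)) x)"
    by (simp only: AB[symmetric])
  then show "Re (qf I (\<lambda>i j. fpoly c (Suc n) \<epsilon> M (zeta k A i * cnj (zeta k A j))) x)
          \<le> Re (qf I (\<lambda>i j. fpoly c (Suc n) \<epsilon> M (A i j)) x)"
    unfolding B_def z_def .
qed

lemma psd_on_psd:
  assumes "psd_on N A" shows "psd {..<N} A"
proof -
  have "herm {..<N} A" using assms unfolding psd_on_def hermitian_on_def herm_def by blast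
  moreover have "\<forall>x. 0 \<le> Re (qf {..<N} A x)"
    using assms unfolding psd_on_def quad_form_def qf_def by blast
  ultimately show ?thesis unfolding psd_def by blast
qed

lemma CC_pos:
  assumes "1 \<le> N" "N \<le> M" "0 < \<rho>" "\<forall>j<N. 0 < c j"
  shows "\<rho> ^ M / c 0 \<le> CC c M N \<rho>" "0 < CC c M N \<rho>"
proof -
  define T where "T j = real ((M choose j)^2 * ((M - j - 1) choose (N - j - 1))^2) * \<rho> ^ (M - j) / c j" for j
  have c0: "0 < c 0" using assms by simp
  have nm: "N - 1 \<le> M - 1" using assms by simp
  have b1: "1 \<le> ((M - 1) choose (N - 1))" using zero_less_binomial[OF nm] by linarith
  have "\<rho> ^ M / c 0 \<le> T 0"
  proof -
    have "(1::real) \<le> real (((M - 1) choose (N - 1))^2)" using b1 by simp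
    then have "\<rho> ^ M \<le> real (((M - 1) choose (N - 1))^2) * \<rho> ^ M"
      using assms by (simp add: mult_le_cancel_right1)
    then show ?thesis unfolding T_def using c0 by (simp add: divide_right_mono)
  qed
  also have "T 0 \<le> (\<Sum>j<N. T j)"
    using assms by (intro member_le_sum) (auto simp: T_def)
  finally show "\<rho> ^ M / c 0 \<le> CC c M N \<rho>" unfolding CC_def T_def .
  moreover have "0 < \<rho> ^ M / c 0" using assms c0 by simp
  ultimately show "0 < CC c M N \<rho>" by linarith
qed

theorem mainTheorem6:
  fixes \<rho> :: real and M N :: nat and c :: "nat \<Rightarrow> real"
    and f :: "complex \<Rightarrow> complex"
  assumes rho_pos: "\<rho> > 0"
    and MN: "M \<ge> N" and N1: "N \<ge> 1"
    and c_pos: "\<forall>j<N. c j > 0"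
    and f_def: "\<forall>z. f z = (\<Sum>j<N. complex_of_real (c j) * z ^ j)
                         - complex_of_real (inverse (CC c M N \<rho>)) * z ^ M"
  shows "(\<forall>A \<in> PN_disc N \<rho>. N > 1 \<longrightarrow>
            (\<exists>i<N. inj_on (\<lambda>j. A i j) {..<N} \<or> inj_on (\<lambda>j. A j i) {..<N}) \<longrightarrow>
            posdef_on N (\<lambda>i j. f (A i j)))
       \<and> (\<forall>A \<in> PN_disc N \<rho>.
            (\<forall>i<N. \<forall>j<N. A i j ^ M =
               complex_of_real (CC c M N \<rho>) * (\<Sum>k<N. complex_of_real (c k) * A i j ^ k))
            \<longrightarrow> N = 1 \<and> A 0 0 = complex_of_real \<rho>)"
proof -
  define C where "C = CC c M N \<rho>"
  have Cpos: "0 < C" and Cb: "\<rho> ^ M / c 0 \<le> C" using CC_pos[OF N1 MN rho_pos c_pos] unfolding C_def by auto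
  define \<epsilon> where "\<epsilon> = inverse C"
  have ff: "f = fpoly c N \<epsilon> M" using f_def unfolding fpoly_def \<epsilon>_def C_def by auto
  have eps: "0 \<le> \<epsilon>" "\<epsilon> * CC c M N \<rho> \<le> 1" using Cpos unfolding \<epsilon>_def C_def by auto
  obtain n where Nn: "N = Suc n" using N1 by (cases N) auto
  have part1: "posdef_on N (\<lambda>i j. f (A i j))"
    if A: "A \<in> PN_disc N \<rho>" and N2: "N > 1" and ex: "\<exists>i<N. inj_on (\<lambda>j. A i j) {..<N} \<or> inj_on (\<lambda>j. A j i) {..<N}" for A
  proof -
    define I where "I = {..<N}"
    have fin: "finite I" and cardI: "card I = Suc n" unfolding I_def Nn by auto
    have psdA: "psd I A" using A unfolding PN_disc_def I_def by (auto intro: psd_on_psd)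
    have Ab: "\<forall>i\<in>I. \<forall>j\<in>I. cmod (A i j) \<le> \<rho>" using A unfolding PN_disc_def I_def by auto
    obtain k where kN: "k < N" and injk: "inj_on (\<lambda>j. A k j) I \<or> inj_on (\<lambda>j. A j k) I" using ex unfolding I_def by blast
    have k: "k \<in> I" using kN unfolding I_def by simp
    have herm: "\<forall>i\<in>I. \<forall>j\<in>I. A j i = cnj (A i j)" using psdA unfolding psd_def herm_def by blast
    define a where "a = Re (A k k)"
    have a0: "a \<noteq> 0"
    proof
      assume "a = 0"
      then have col: "\<forall>j\<in>I. A j k = 0" using psd_offdiag[OF psdA fin _ k] unfolding a_def by blast
      have row: "\<forall>j\<in>I. A k j = 0"
      proof
        fix j assume j: "j \<in> I"
        have "A k j = cnj (A j k)" using herm j k by blast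
        then show "A k j = 0" using col j by simp
      qed
      have 01: "0 \<in> I" "1 \<in> I" using N2 unfolding I_def by auto
      have "A k 0 = A k 1" "A 0 k = A 1 k" using row col 01 by auto
      then show False using injk 01 unfolding inj_on_def by auto
    qed
    have injz: "inj_on (zeta k A) I"
    proof (rule inj_onI)
      fix j1 j2 assume j: "j1 \<in> I" "j2 \<in> I" and eq: "zeta k A j1 = zeta k A j2"
      have sq: "complex_of_real (sqrt a) \<noteq> 0" using a0 psd_diag(2)[OF psdA fin k] unfolding a_def by simp
      have c: "A j1 k = A j2 k" using eq a0 sq unfolding zeta_def a_def by (simp add: divide_cancel_right)
      have "A k j1 = cnj (A j1 k)" "A k j2 = cnj (A j2 k)" using herm j k by blast+
      then have r: "A k j1 = A k j2" using c by simp
      show "j1 = j2" using injk c r j unfolding inj_on_def by blast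
    qed
    have "0 < Re (qf I (\<lambda>i j. f (A i j)) x) \<and> Im (qf I (\<lambda>i j. f (A i j)) x) = 0" if x: "\<exists>i<N. x i \<noteq> 0" for x
    proof
      obtain i0 where i0: "i0 \<in> I" "x i0 \<noteq> 0" using x unfolding I_def by auto
      have "0 < Re (qf I (\<lambda>i j. fpoly c N \<epsilon> M (zeta k A i * cnj (zeta k A j))) x)"
        using rank_one_strict[where u="zeta k A" and x=x and I=I and n=N and M=M and \<rho>=\<rho> and c=c and \<epsilon>=\<epsilon>, OF fin _ MN rho_pos c_pos _ eps injz _ i0] decomp_mono(2)[OF rho_pos fin cardI _ _ eps[unfolded Nn] psdA Ab k]
          cardI Nn MN c_pos N2 by auto
      also have "\<dots> \<le> Re (qf I (\<lambda>i j. fpoly c N \<epsilon> M (A i j)) x)"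
        using decomp_mono(1)[OF rho_pos fin cardI _ _ eps[unfolded Nn] psdA Ab k] MN c_pos unfolding Nn by auto
      finally show "0 < Re (qf I (\<lambda>i j. f (A i j)) x)" unfolding ff .
      show "Im (qf I (\<lambda>i j. f (A i j)) x) = 0"
        unfolding ff by (rule herm_qf_real[OF herm_fpoly]) (use psdA psd_def in blast)
    qed
    moreover have "herm I (\<lambda>i j. f (A i j))"
      using herm_fpoly[of I A c N \<epsilon> M] psdA unfolding ff psd_def by blast
    then have "hermitian_on N (\<lambda>i j. f (A i j))"
      unfolding herm_def hermitian_on_def I_def by blast
    moreover have "quad_form N (\<lambda>i j. f (A i j)) x = qf I (\<lambda>i j. f (A i j)) x" for x
      unfolding quad_form_def qf_def I_def by simp
    ultimately show ?thesis unfolding posdef_on_def by simp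
  qed
  have part2: "N = 1 \<and> A 0 0 = complex_of_real \<rho>"
    if A: "A \<in> PN_disc N \<rho>" and eq: "\<forall>i<N. \<forall>j<N. A i j ^ M = complex_of_real C * (\<Sum>k<N. complex_of_real (c k) * A i j ^ k)" for A
  proof -
    have psdA: "psd {..<N} A" using A unfolding PN_disc_def by (auto intro: psd_on_psd)
    have z: "(0::nat) \<in> {..<N}" using N1 by simp
    define a where "a = Re (A 0 0)"
    have a0: "0 \<le> a" unfolding a_def by (rule psd_diag(2)[OF psdA _ z]) simp
    have Aa: "A 0 0 = complex_of_real a" unfolding a_def by (rule psd_diag(3)[OF psdA _ z]) simp
    have arho: "a \<le> \<rho>"
    proof -
      have "cmod (A 0 0) \<le> \<rho>" using A N1 unfolding PN_disc_def by auto
      then show ?thesis unfolding Aa by simp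
    qed
    have e0: "A 0 0 ^ M = complex_of_real C * (\<Sum>k<N. complex_of_real (c k) * A 0 0 ^ k)" using eq N1 by auto
    have er: "a ^ M = C * (\<Sum>k<N. c k * a ^ k)"
    proof -
      have "complex_of_real (a ^ M) = complex_of_real (C * (\<Sum>k<N. c k * a ^ k))"
        using e0 unfolding Aa by simp
      then show ?thesis using of_real_eq_iff by blast
    qed
    have c0: "0 < c 0" using c_pos N1 by simp
    have aM: "a ^ M \<le> \<rho> ^ M" using a0 arho by (intro power_mono) auto
    have CC0: "\<rho> ^ M \<le> C * c 0" using Cb c0 by (simp add: divide_le_eq)
    show ?thesis
    proof (cases "N = 1")
      case True
      have C1: "C = \<rho> ^ M / c 0" unfolding C_def CC_def True by simp
      have "a ^ M = \<rho> ^ M" using er c0 unfolding True C1 by simp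
      moreover have "0 < M" using MN N1 by simp
      ultimately have "a = \<rho>" using a0 rho_pos power_eq_imp_eq_base[of a M \<rho>] by simp
      then show ?thesis using True Aa by simp
    next
      case False
      then have N2: "2 \<le> N" using N1 by simp
      have c1: "0 < c 1" using c_pos N2 by simp
      have "c 0 + c 1 * a = (\<Sum>k<2. c k * a ^ k)" by (simp add: numeral_2_eq_2)
      also have "\<dots> \<le> (\<Sum>k<N. c k * a ^ k)"
        using N2 c_pos a0 by (intro sum_mono2) auto
      finally have T: "c 0 + c 1 * a \<le> (\<Sum>k<N. c k * a ^ k)" .
      have "C * (c 0 + c 1 * a) \<le> a ^ M" using T Cpos er by (simp add: mult_left_mono)
      then have "C * c 0 + C * (c 1 * a) \<le> \<rho> ^ M" using aM by (simp add: algebra_simps)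
      then have "C * (c 1 * a) \<le> 0" using CC0 by linarith
      have a00: "a = 0"
      proof (rule ccontr)
        assume "a \<noteq> 0" then have "0 < a" using a0 by simp
        then have "0 < C * (c 1 * a)" using Cpos c1 by simp
        then show False using \<open>C * (c 1 * a) \<le> 0\<close> by simp
      qed
      have aM0: "a ^ M = 0" using MN N1 a00 by simp
      have "C * (c 0 + c 1 * a) \<le> 0" using \<open>C * (c 0 + c 1 * a) \<le> a ^ M\<close> aM0 by linarith
      then have "C * c 0 \<le> 0" using a00 by simp
      moreover have "0 < C * c 0" using Cpos c0 by simp
      ultimately show ?thesis by simp
    qed
  qed
  show ?thesis using part1 part2 unfolding C_def by blast
qed



end
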